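(* Let $\mathsf{\Sigma}\in\mathbb{R}^{N\times N_S}$ and $\mathsf{\Lambda}\in\mathbb{R}^{N\times N_L}$ be the Star-to-RWG and Loop-to-RWG matrices of a triangular surface mesh, and let $\mathsf{\Sigma}_n=\mathsf{\Sigma}(\mathsf{\Sigma}^{\mathrm T}\mathsf{\Sigma})^+(\mathsf{\Sigma}^{\mathrm T}\mathsf{\Sigma})_n$ and $\mathsf{\Lambda}_n=\mathsf{\Lambda}(\mathsf{\Lambda}^{\mathrm T}\mathsf{\Lambda})^+(\mathsf{\Lambda}^{\mathrm T}\mathsf{\Lambda})_n$ be the filtered Star and Loop matrices (see context). Then for integers $1\le m<n<p<q\le N_S$, $$(\mathsf{\Sigma}_m-\mathsf{\Sigma}_n)^{\mathrm T}(\mathsf{\Sigma}_p-\mathsf{\Sigma}_q)=\mathsf{0},$$ and for integers $1\le m<n<p<q\le N_L$, $$(\mathsf{\Lambda}_m-\mathsf{\Lambda}_n)^{\mathrm T}(\mathsf{\Lambda}_p-\mathsf{\Lambda}_q)=\mathsf{0}.$$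
   Context: Consider a closed triangulated surface with $N$ edges, $N_S$ triangles and $N_L$ vertices. Each edge $m$ is shared by two triangles $c_m^+$, $c_m^-$. $[\mathsf{\Sigma}]_{mn}=1$ if cell $n$ is $c_m^+$, $-1$ if cell $n$ is $c_m^-$, $0$ otherwise. $[\mathsf{\Lambda}]_{mn}=\pm1$ when vertex $n$ is an endpoint of edge $m$ (opposite signs for the two endpoints, fixed by the orientation convention), $0$ otherwise. $^+$ denotes the Moore–Penrose pseudo-inverse. For $\mathsf{X}\in\{\mathsf{\Sigma},\mathsf{\Lambda}\}$ with $N_x$ columns, fix an SVD $\mathsf{X}=\mathsf{U}_X\mathsf{S}_X\mathsf{V}_X^{\mathrm T}$ with $\mathsf{V}_X$ orthogonal $N_x\times N_x$ and singular values $\sigma_{X,1}\ge\dots\ge\sigma_{X,N_x}\ge0$, so $\mathsf{X}^{\mathrm T}\mathsf{X}=\mathsf{V}_X\mathrm{diag}(\sigma_{X,i}^2)\mathsf{V}_X^{\mathrm T}$. For $1\le n\le N_x$, $\mathsf{L}_{X,n}$ is diagonal with $[\mathsf{L}_{X,n}]_{ii}=\sigma_{X,i}$ if $i>N_x-n$ and $0$ otherwise, and $(\mathsf{X}^{\mathrm T}\mathsf{X})_n=\mathsf{V}_X\mathsf{L}_{X,n}^2\mathsf{V}_X^{\mathrm T}$. *)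

theory Defs
  imports "Jordan_Normal_Form.Matrix"
begin

text \<open>Edges are indexed 0..<N, cells (triangles) 0..<NS, vertices 0..<NL.
  Edge m has cells cp m (= c_m^+) and cm m (= c_m^-), and endpoints va m, vb m
  (orientation convention: +1 at va m, -1 at vb m).\<close>

definition star_mat :: "nat \<Rightarrow> nat \<Rightarrow> (nat \<Rightarrow> nat) \<Rightarrow> (nat \<Rightarrow> nat) \<Rightarrow> real mat" where
  "star_mat N NS cp cm = mat N NS (\<lambda>(m, n). if n = cp m then 1 else if n = cm m then -1 else 0)"

definition loop_mat :: "nat \<Rightarrow> nat \<Rightarrow> (nat \<Rightarrow> nat) \<Rightarrow> (nat \<Rightarrow> nat) \<Rightarrow> real mat" where
  "loop_mat N NL va vb = mat N NL (\<lambda>(m, n). if n = va m then 1 else if n = vb m then -1 else 0)"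

definition closed_tri_mesh ::
  "nat \<Rightarrow> nat \<Rightarrow> nat \<Rightarrow> (nat \<Rightarrow> nat) \<Rightarrow> (nat \<Rightarrow> nat) \<Rightarrow> (nat \<Rightarrow> nat) \<Rightarrow> (nat \<Rightarrow> nat) \<Rightarrow> bool" where
  "closed_tri_mesh N NS NL cp cm va vb \<longleftrightarrow>
     (\<forall>m<N. cp m < NS \<and> cm m < NS \<and> cp m \<noteq> cm m \<and> va m < NL \<and> vb m < NL \<and> va m \<noteq> vb m) \<and>
     (\<forall>c<NS. card {m. m < N \<and> (cp m = c \<or> cm m = c)} = 3) \<and>
     (\<forall>v<NL. \<exists>m<N. va m = v \<or> vb m = v)"

definition penrose :: "real mat \<Rightarrow> real mat \<Rightarrow> bool" where
  "penrose A B \<longleftrightarrow> B \<in> carrier_mat (dim_col A) (dim_row A) \<and>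
     A * B * A = A \<and> B * A * B = B \<and>
     transpose_mat (A * B) = A * B \<and> transpose_mat (B * A) = B * A"

definition pinv :: "real mat \<Rightarrow> real mat" where
  "pinv A = (THE B. penrose A B)"

definition diag_rect :: "nat \<Rightarrow> nat \<Rightarrow> (nat \<Rightarrow> real) \<Rightarrow> real mat" where
  "diag_rect r c d = mat r c (\<lambda>(i, j). if i = j then d i else 0)"

definition orthogonal_mat :: "nat \<Rightarrow> real mat \<Rightarrow> bool" where
  "orthogonal_mat k Q \<longleftrightarrow> Q \<in> carrier_mat k k \<and> Q * transpose_mat Q = 1\<^sub>m k \<and>
     transpose_mat Q * Q = 1\<^sub>m k"

text \<open>X = U S V^T is an SVD of X; singular values are indexed from 0:
  \<sigma> i is the paper's \<sigma>_{X,i+1}.\<close>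
definition is_svd :: "real mat \<Rightarrow> real mat \<Rightarrow> (nat \<Rightarrow> real) \<Rightarrow> real mat \<Rightarrow> bool" where
  "is_svd X U \<sigma> V \<longleftrightarrow>
     orthogonal_mat (dim_row X) U \<and> orthogonal_mat (dim_col X) V \<and>
     (\<forall>i j. i \<le> j \<longrightarrow> j < dim_col X \<longrightarrow> \<sigma> j \<le> \<sigma> i) \<and>
     (\<forall>i < dim_col X. 0 \<le> \<sigma> i) \<and>
     X = U * diag_rect (dim_row X) (dim_col X) \<sigma> * transpose_mat V"

text \<open>L_{X,n}: diagonal with (1-based) entry i equal to \<sigma>_i if i > N_x - n, else 0.
  In 0-based indexing: entry i is \<sigma> i if i \<ge> N_x - n.\<close>
definition L_mat :: "nat \<Rightarrow> (nat \<Rightarrow> real) \<Rightarrow> nat \<Rightarrow> real mat" where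
  "L_mat Nx \<sigma> n = diag_rect Nx Nx (\<lambda>i. if Nx - n \<le> i then \<sigma> i else 0)"

definition gram_trunc :: "real mat \<Rightarrow> (nat \<Rightarrow> real) \<Rightarrow> real mat \<Rightarrow> nat \<Rightarrow> real mat" where
  "gram_trunc X \<sigma> V n = V * (L_mat (dim_col X) \<sigma> n * L_mat (dim_col X) \<sigma> n) * transpose_mat V"

definition filtered :: "real mat \<Rightarrow> (nat \<Rightarrow> real) \<Rightarrow> real mat \<Rightarrow> nat \<Rightarrow> real mat" where
  "filtered X \<sigma> V n = X * pinv (transpose_mat X * X) * gram_trunc X \<sigma> V n"

end

theory Submission
  imports Defs
begin


lemma diag_rect_carrier[simp]: "diag_rect a b d \<in> carrier_mat a b"
  by (simp add: diag_rect_def)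

lemma diag_rect_mult: "diag_rect a b d * diag_rect b c e = diag_rect a c (\<lambda>i. if i < b then d i * e i else 0)"
proof (rule eq_matI)
  fix i j assume ij: "i < dim_row (diag_rect a c (\<lambda>i. if i < b then d i * e i else 0))"
    "j < dim_col (diag_rect a c (\<lambda>i. if i < b then d i * e i else 0))"
  hence ij': "i < a" "j < c" by (auto simp: diag_rect_def)
  have "(diag_rect a b d * diag_rect b c e) $$ (i, j) = (\<Sum>k<b. (if i = k then d i else 0) * (if k = j then e k else 0))"
    using ij' by (simp add: diag_rect_def scalar_prod_def row_def col_def lessThan_atLeast0)
  also have "\<dots> = (\<Sum>k<b. if k = i then (if i = j then d i * e i else 0) else 0)"
    by (rule sum.cong) auto
  also have "\<dots> = (if i < b then (if i = j then d i * e i else 0) else 0)"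
    by (simp add: sum.delta)
  finally show "(diag_rect a b d * diag_rect b c e) $$ (i, j) = diag_rect a c (\<lambda>i. if i < b then d i * e i else 0) $$ (i, j)"
    using ij' by (simp add: diag_rect_def)
qed (auto simp: diag_rect_def)

lemma diag_rect_transpose: "transpose_mat (diag_rect a b d) = diag_rect b a d"
  by (rule eq_matI) (auto simp: diag_rect_def)

lemma diag_rect_minus: "diag_rect a b d - diag_rect a b e = diag_rect a b (\<lambda>i. d i - e i)"
  by (rule eq_matI) (auto simp: diag_rect_def)

lemma diag_rect_cong: "(\<And>i. i < a \<Longrightarrow> i < b \<Longrightarrow> d i = e i) \<Longrightarrow> diag_rect a b d = diag_rect a b e"
  by (rule eq_matI) (auto simp: diag_rect_def)

lemma diag_rect_zero: "(\<And>i. i < a \<Longrightarrow> i < b \<Longrightarrow> d i = 0) \<Longrightarrow> diag_rect a b d = 0\<^sub>m a b"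
  by (rule eq_matI) (auto simp: diag_rect_def)

lemma penrose_unique:
  assumes A: "A \<in> carrier_mat n n" and p1: "penrose A B1" and p2: "penrose A B2"
  shows "B1 = B2"
proof -
  have B1: "B1 \<in> carrier_mat n n" and B2: "B2 \<in> carrier_mat n n" using p1 p2 A by (auto simp: penrose_def)
  have tA: "transpose_mat A \<in> carrier_mat n n" and tB1: "transpose_mat B1 \<in> carrier_mat n n"
    and tB2: "transpose_mat B2 \<in> carrier_mat n n" using A B1 B2 by auto
  have AA: "transpose_mat A * A \<in> carrier_mat n n" "B1 * A \<in> carrier_mat n n" "A * B2 \<in> carrier_mat n n"
   "transpose_mat B2 * B2 \<in> carrier_mat n n" "A * transpose_mat A \<in> carrier_mat n n"
   "transpose_mat B1 * transpose_mat A \<in> carrier_mat n n" using A B1 B2 by auto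
  note pp = p1[unfolded penrose_def] p2[unfolded penrose_def]
  have s1: "transpose_mat (A * B1) = A * B1" "transpose_mat (B1 * A) = B1 * A"
    and s2: "transpose_mat (A * B2) = A * B2" "transpose_mat (B2 * A) = B2 * A" using pp by auto
  have "B1 = B1 * (A * B1)" using pp A B1 by auto
  also have "\<dots> = B1 * (transpose_mat B1 * transpose_mat A)" using s1 A B1 transpose_mult by metis
  also have "transpose_mat A = transpose_mat (A * B2 * A)" using pp by auto
  also have "\<dots> = transpose_mat A * transpose_mat (A * B2)" using A B2 transpose_mult[of "A * B2" n n A n] by simp
  also have "\<dots> = transpose_mat A * (A * B2)" using s2 by simp
  also have "B1 * (transpose_mat B1 * (transpose_mat A * (A * B2))) = B1 * (transpose_mat (A * B1) * A * B2)"
    using A B1 B2 by (simp add: transpose_mult[of _ n n] assoc_mult_mat[of _ n n _ n _ n])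
  also have "\<dots> = (B1 * A * B1) * A * B2" using A B1 B2 s1 by (simp add: assoc_mult_mat[of _ n n _ n _ n])
  also have "\<dots> = B1 * A * B2" using pp by auto
  finally have e1: "B1 = B1 * A * B2" .
  have "B2 = (B2 * A) * B2" using pp A B2 by auto
  also have "\<dots> = (transpose_mat A * transpose_mat B2) * B2" using s2 A B2 transpose_mult by metis
  also have "transpose_mat A = transpose_mat (A * B1 * A)" using pp by auto
  also have "\<dots> = transpose_mat (B1 * A) * transpose_mat A" using A B1 transpose_mult[of A n n "B1 * A" n] by simp
  also have "\<dots> = (B1 * A) * transpose_mat A" using s1 by simp
  also have "(B1 * A * transpose_mat A * transpose_mat B2) * B2 = B1 * A * (transpose_mat (B2 * A) * B2)"
    using A B1 B2 by (simp add: transpose_mult[of _ n n] assoc_mult_mat[of _ n n _ n _ n])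
  also have "\<dots> = B1 * A * (B2 * A * B2)" using A B1 B2 s2 by (simp add: assoc_mult_mat[of _ n n _ n _ n])
  also have "\<dots> = B1 * A * B2" using pp by auto
  finally show ?thesis using e1 by simp
qed

lemma orth_carrier: "orthogonal_mat k Q \<Longrightarrow> Q \<in> carrier_mat k k"
  by (simp add: orthogonal_mat_def)

lemma conj3:
  assumes U: "orthogonal_mat r U" and V: "orthogonal_mat c V"
    and S: "S \<in> carrier_mat r c" and P: "P \<in> carrier_mat c c" and Q: "Q \<in> carrier_mat c c"
  shows "(U * S * transpose_mat V) * (V * P * transpose_mat V) * (V * Q * transpose_mat V) = U * (S * P * Q) * transpose_mat V"
proof -
  have Uc: "U \<in> carrier_mat r r" and Vc: "V \<in> carrier_mat c c" and VV: "transpose_mat V * V = 1\<^sub>m c"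
    using U V by (auto simp: orthogonal_mat_def)
  have Vt: "transpose_mat V \<in> carrier_mat c c" using Vc by simp
  have "(U * S * transpose_mat V) * (V * P * transpose_mat V) = U * S * (transpose_mat V * V) * P * transpose_mat V"
    using Uc Vc Vt S P by (simp add: assoc_mult_mat[of _ r r _ c _ c] assoc_mult_mat[of _ r c _ c _ c] assoc_mult_mat[of _ c c _ c _ c])
  also have "\<dots> = U * S * P * transpose_mat V" using VV S Uc by simp
  finally have e: "(U * S * transpose_mat V) * (V * P * transpose_mat V) = U * S * P * transpose_mat V" .
  have "U * S * P * transpose_mat V * (V * Q * transpose_mat V) = U * S * P * (transpose_mat V * V) * Q * transpose_mat V"
    using Uc Vc Vt S P Q by (simp add: assoc_mult_mat[of _ r r _ c _ c] assoc_mult_mat[of _ r c _ c _ c] assoc_mult_mat[of _ c c _ c _ c])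
  also have "\<dots> = U * (S * P * Q) * transpose_mat V" using VV S Uc P Q
    by (simp add: assoc_mult_mat[of _ r r _ c _ c] assoc_mult_mat[of _ r c _ c _ c] assoc_mult_mat[of _ c c _ c _ c])
  finally show ?thesis using e by simp
qed

lemma conj2:
  assumes V: "orthogonal_mat c V" and P: "P \<in> carrier_mat c c" and Q: "Q \<in> carrier_mat c c"
  shows "(V * P * transpose_mat V) * (V * Q * transpose_mat V) = V * (P * Q) * transpose_mat V"
proof -
  have Vc: "V \<in> carrier_mat c c" and VV: "transpose_mat V * V = 1\<^sub>m c"
    using V by (auto simp: orthogonal_mat_def)
  have Vt: "transpose_mat V \<in> carrier_mat c c" using Vc by simp
  have "(V * P * transpose_mat V) * (V * Q * transpose_mat V) = V * P * (transpose_mat V * V) * Q * transpose_mat V"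
    using Vc Vt P Q by (simp add: assoc_mult_mat[of _ c c _ c _ c])
  also have "\<dots> = V * (P * Q) * transpose_mat V" using VV Vc P Q by (simp add: assoc_mult_mat[of _ c c _ c _ c])
  finally show ?thesis .
qed

lemma conj_transpose:
  fixes V P :: "real mat"
  assumes V: "V \<in> carrier_mat c c" and P: "P \<in> carrier_mat c c"
  shows "transpose_mat (V * P * transpose_mat V) = V * transpose_mat P * transpose_mat V"
proof -
  have "transpose_mat (V * P * transpose_mat V) = transpose_mat (transpose_mat V) * transpose_mat (V * P)"
    using transpose_mult[of "V * P" c c "transpose_mat V" c] V P by simp
  also have "transpose_mat (V * P) = transpose_mat P * transpose_mat V" using transpose_mult[of V c c P c] V P by simp
  finally show ?thesis using V P by (simp add: assoc_mult_mat[of _ c c _ c _ c])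
qed

lemma gram_form:
  fixes U V E F :: "real mat"
  assumes U: "orthogonal_mat r U" and V: "orthogonal_mat c V"
    and E: "E \<in> carrier_mat r c" and F: "F \<in> carrier_mat r c"
  shows "transpose_mat (U * E * transpose_mat V) * (U * F * transpose_mat V) = V * (transpose_mat E * F) * transpose_mat V"
proof -
  have Uc: "U \<in> carrier_mat r r" and Vc: "V \<in> carrier_mat c c" and UU: "transpose_mat U * U = 1\<^sub>m r"
    using U V by (auto simp: orthogonal_mat_def)
  have "transpose_mat (U * E * transpose_mat V) = V * transpose_mat E * transpose_mat U"
  proof -
    have "transpose_mat (U * E * transpose_mat V) = transpose_mat (transpose_mat V) * transpose_mat (U * E)"
      using transpose_mult[of "U * E" r c "transpose_mat V" c] Uc Vc E by simp
    also have "transpose_mat (U * E) = transpose_mat E * transpose_mat U" using transpose_mult[of U r r E c] Uc E by simp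
    finally show ?thesis using Uc Vc E by (simp add: assoc_mult_mat[of _ c c _ r _ r])
  qed
  hence "transpose_mat (U * E * transpose_mat V) * (U * F * transpose_mat V) = V * transpose_mat E * (transpose_mat U * U) * F * transpose_mat V"
    using Uc Vc E F by (simp add: assoc_mult_mat[of _ c c _ r _ r] assoc_mult_mat[of _ c r _ r _ r]
       assoc_mult_mat[of _ r r _ c _ c] assoc_mult_mat[of _ c r _ c _ c] assoc_mult_mat[of _ c r _ r _ c]  assoc_mult_mat[of _ c c _ r _ c]  assoc_mult_mat[of _ c c _ c _ c])
  also have "\<dots> = V * (transpose_mat E * F) * transpose_mat V" using UU Vc E F
    by (simp add: assoc_mult_mat[of _ c c _ r _ c])
  finally show ?thesis .
qed

lemma minus_conj:
  fixes U V A B :: "real mat"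
  assumes "U \<in> carrier_mat r r" "V \<in> carrier_mat c c" "A \<in> carrier_mat r c" "B \<in> carrier_mat r c"
  shows "U * A * transpose_mat V - U * B * transpose_mat V = U * (A - B) * transpose_mat V"
  using assms by (simp add: mult_minus_distrib_mat[of U r r A c B] minus_mult_distrib_mat[of "U * A" r c "U * B" "transpose_mat V" c])

lemma main_general:
  fixes X U V :: "real mat" and \<sigma> :: "nat \<Rightarrow> real"
  assumes svd: "is_svd X U \<sigma> V" and h: "1 \<le> m" "m < n" "n < p" "p < q" "q \<le> dim_col X"
  shows "transpose_mat (filtered X \<sigma> V m - filtered X \<sigma> V n) * (filtered X \<sigma> V p - filtered X \<sigma> V q)
     = 0\<^sub>m (dim_col X) (dim_col X)"
proof -
  define r where "r = dim_row X"
  define c where "c = dim_col X"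
  define S where "S = diag_rect r c \<sigma>"
  have U: "orthogonal_mat r U" and V: "orthogonal_mat c V" and XS: "X = U * S * transpose_mat V"
    using svd by (auto simp: is_svd_def r_def c_def S_def)
  have Uc: "U \<in> carrier_mat r r" and Vc: "V \<in> carrier_mat c c" using U V by (auto simp: orthogonal_mat_def)
  define \<delta> where "\<delta> = (\<lambda>i. if i < r then \<sigma> i * \<sigma> i else (0::real))"
  define \<delta>' where "\<delta>' = (\<lambda>i. inverse (\<delta> i))"
  define D where "D = diag_rect c c \<delta>"
  define D' where "D' = diag_rect c c \<delta>'"
  have Dc: "D \<in> carrier_mat c c" "D' \<in> carrier_mat c c" by (auto simp: D_def D'_def)
  have XtX: "transpose_mat X * X = V * D * transpose_mat V"
    unfolding XS by (simp add: gram_form[OF U V] S_def diag_rect_transpose diag_rect_mult D_def \<delta>_def)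
  define B where "B = V * D' * transpose_mat V"
  have DDD: "D * D' * D = D" unfolding D_def D'_def diag_rect_mult
    by (rule diag_rect_cong) (auto simp: \<delta>'_def, metis right_inverse left_inverse)
  have DDD': "D' * D * D' = D'" unfolding D_def D'_def diag_rect_mult
    by (rule diag_rect_cong) (auto simp: \<delta>'_def, metis right_inverse left_inverse)
  have DD1: "transpose_mat (D * D') = D * D'" "transpose_mat (D' * D) = D' * D"
    unfolding D_def D'_def diag_rect_mult diag_rect_transpose by auto
  have pen: "penrose (transpose_mat X * X) B"
  proof -
    have DD'c: "D * D' \<in> carrier_mat c c" "D' * D \<in> carrier_mat c c" using Dc by auto
    note c2 = conj2[OF V]
    have e1: "V * D * transpose_mat V * (V * D' * transpose_mat V) = V * (D * D') * transpose_mat V"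
      by (rule c2) (use Dc in auto)
    have e2: "V * D' * transpose_mat V * (V * D * transpose_mat V) = V * (D' * D) * transpose_mat V"
      by (rule c2) (use Dc in auto)
    have e3: "V * (D * D') * transpose_mat V * (V * D * transpose_mat V) = V * (D * D' * D) * transpose_mat V"
      by (rule c2) (use Dc in auto)
    have e4: "V * (D' * D) * transpose_mat V * (V * D' * transpose_mat V) = V * (D' * D * D') * transpose_mat V"
      by (rule c2) (use Dc in auto)
    have t1: "transpose_mat (V * (D * D') * transpose_mat V) = V * (D * D') * transpose_mat V"
      using conj_transpose[OF Vc DD'c(1)] DD1 by simp
    have t2: "transpose_mat (V * (D' * D) * transpose_mat V) = V * (D' * D) * transpose_mat V"
      using conj_transpose[OF Vc DD'c(2)] DD1 by simp
    show ?thesis unfolding penrose_def XtX B_def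
      using e1 e2 e3 e4 t1 t2 DDD DDD' Vc Dc by simp
  qed
  have pinv: "pinv (transpose_mat X * X) = B"
    unfolding pinv_def
  proof (rule the_equality)
    show "penrose (transpose_mat X * X) B" by (rule pen)
    show "B' = B" if "penrose (transpose_mat X * X) B'" for B'
      using penrose_unique[of "transpose_mat X * X" c B' B] that pen XtX Vc Dc by auto
  qed
  define l where "l = (\<lambda>k i. if c - k \<le> i then \<sigma> i else 0)"
  define G where "G = (\<lambda>k i. \<sigma> i * \<delta>' i * (l k i * l k i))"
  have filt: "filtered X \<sigma> V k = U * diag_rect r c (G k) * transpose_mat V" for k
  proof -
    have "filtered X \<sigma> V k = (U * S * transpose_mat V) * (V * D' * transpose_mat V) * (V * (L_mat c \<sigma> k * L_mat c \<sigma> k) * transpose_mat V)"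
    proof -
      have f0: "filtered X \<sigma> V k = X * B * (V * (L_mat c \<sigma> k * L_mat c \<sigma> k) * transpose_mat V)"
        unfolding filtered_def pinv gram_trunc_def c_def ..
      show ?thesis unfolding f0 B_def by (subst XS) (rule refl)
    qed
    also have "\<dots> = U * (S * D' * (L_mat c \<sigma> k * L_mat c \<sigma> k)) * transpose_mat V"
      by (rule conj3[OF U V]) (auto simp: S_def D'_def L_mat_def diag_rect_mult)
    also have "S * D' * (L_mat c \<sigma> k * L_mat c \<sigma> k) = diag_rect r c (G k)"
      unfolding S_def D'_def L_mat_def diag_rect_mult
      by (rule diag_rect_cong) (auto simp: G_def l_def)
    finally show ?thesis .
  qed
  have key: "(G m i - G n i) * (G p i - G q i) = 0" for i
  proof -
    have "l m i = l n i \<or> l p i = l q i" using h unfolding l_def c_def by auto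
    thus ?thesis unfolding G_def by auto
  qed
  have "transpose_mat (filtered X \<sigma> V m - filtered X \<sigma> V n) * (filtered X \<sigma> V p - filtered X \<sigma> V q)
    = transpose_mat (U * (diag_rect r c (G m) - diag_rect r c (G n)) * transpose_mat V) * 
       (U * (diag_rect r c (G p) - diag_rect r c (G q)) * transpose_mat V)"
    unfolding filt using Uc Vc by (simp add: minus_conj)
  also have "\<dots> = V * (transpose_mat (diag_rect r c (G m) - diag_rect r c (G n)) * (diag_rect r c (G p) - diag_rect r c (G q))) * transpose_mat V"
    by (rule gram_form[OF U V]) (auto simp: diag_rect_minus)
  also have "transpose_mat (diag_rect r c (G m) - diag_rect r c (G n)) * (diag_rect r c (G p) - diag_rect r c (G q)) = 0\<^sub>m c c"
    unfolding diag_rect_minus diag_rect_transpose diag_rect_mult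
    by (rule diag_rect_zero) (simp add: key)
  also have "V * 0\<^sub>m c c * transpose_mat V = 0\<^sub>m c c" using Vc by simp
  finally show ?thesis unfolding c_def .
qed


theorem mainTheorem3:
  fixes N NS NL :: nat and cp cm va vb :: "nat \<Rightarrow> nat"
    and US VS UL VL :: "real mat" and \<sigma>S \<sigma>L :: "nat \<Rightarrow> real"
  assumes mesh: "closed_tri_mesh N NS NL cp cm va vb"
    and svdS: "is_svd (star_mat N NS cp cm) US \<sigma>S VS"
    and svdL: "is_svd (loop_mat N NL va vb) UL \<sigma>L VL"
  shows "(\<forall>m n p q :: nat. 1 \<le> m \<and> m < n \<and> n < p \<and> p < q \<and> q \<le> NS \<longrightarrow>
           transpose_mat (filtered (star_mat N NS cp cm) \<sigma>S VS m - filtered (star_mat N NS cp cm) \<sigma>S VS n)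
             * (filtered (star_mat N NS cp cm) \<sigma>S VS p - filtered (star_mat N NS cp cm) \<sigma>S VS q)
           = 0\<^sub>m NS NS)
       \<and> (\<forall>m n p q :: nat. 1 \<le> m \<and> m < n \<and> n < p \<and> p < q \<and> q \<le> NL \<longrightarrow>
           transpose_mat (filtered (loop_mat N NL va vb) \<sigma>L VL m - filtered (loop_mat N NL va vb) \<sigma>L VL n)
             * (filtered (loop_mat N NL va vb) \<sigma>L VL p - filtered (loop_mat N NL va vb) \<sigma>L VL q)
           = 0\<^sub>m NL NL)"
proof
  have c: "dim_col (star_mat N NS cp cm) = NS" "dim_col (loop_mat N NL va vb) = NL"
    by (auto simp: star_mat_def loop_mat_def)
  show "\<forall>m n p q :: nat. 1 \<le> m \<and> m < n \<and> n < p \<and> p < q \<and> q \<le> NS \<longrightarrow>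
           transpose_mat (filtered (star_mat N NS cp cm) \<sigma>S VS m - filtered (star_mat N NS cp cm) \<sigma>S VS n)
             * (filtered (star_mat N NS cp cm) \<sigma>S VS p - filtered (star_mat N NS cp cm) \<sigma>S VS q)
           = 0\<^sub>m NS NS"
    using main_general[OF svdS] c by metis
  show "\<forall>m n p q :: nat. 1 \<le> m \<and> m < n \<and> n < p \<and> p < q \<and> q \<le> NL \<longrightarrow>
           transpose_mat (filtered (loop_mat N NL va vb) \<sigma>L VL m - filtered (loop_mat N NL va vb) \<sigma>L VL n)
             * (filtered (loop_mat N NL va vb) \<sigma>L VL p - filtered (loop_mat N NL va vb) \<sigma>L VL q)
           = 0\<^sub>m NL NL"
    using main_general[OF svdL] c by metis
qed

end
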